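(* Let $\eta>2$, $\bar\sigma_2^2>0$, $m>0$, $\theta>0$, $m_0=\lceil m\rceil$, $a_m=m\,\Gamma(1+m)^{-1/m}$, and for $k=1,\dots,m_0$ let $$H_k=\frac{4^{1/\eta}}{\sqrt\pi}\Gamma\!\left(1-\tfrac{2}{\eta}\right)\Gamma\!\left(\tfrac12+\tfrac{2}{\eta}\right)\left(\bar\sigma_2^2\frac{k a_m}{m\theta}\right)^{2/\eta}.$$ For $\Lambda>0$ define $$\bar R_{\mathrm{cell}}(\Lambda)=\sum_{k=1}^{m_0}(-1)^{k+1}\binom{m_0}{k}\int_0^{+\infty}\frac{1}{1+x}\cdot\frac{1}{\frac{1}{\Lambda}+H_k x^{2/\eta}}\,\mathrm{d}x.$$ Then, as $\Lambda\to\infty$, $$\bar R_{\mathrm{cell}}(\Lambda)\to\bar R_{\mathrm{cell},asy}=\frac{\pi}{\sin\!\left(\frac{2\pi}{\eta}\right)}\sum_{k=1}^{m_0}(-1)^{k+1}\binom{m_0}{k}\frac{1}{H_k}.$$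
   Context: $\Gamma$ is the Gamma function and $\lceil\cdot\rceil$ the ceiling. In the paper $\Lambda=\lambda_u/\lambda_b$ is the user-to-base-station density ratio, $\bar R_{\mathrm{cell}}$ is the (approximate) average sum-rate per cell of uplink CUMA, $\bar\sigma_2^2$ is a normalized interference variance, $m$ the Gamma shape parameter and $\theta=\theta_S(1)$ the Gamma scale parameter of the desired signal power at unit distance; for the claim these are arbitrary positive constants. *)

theory Defs
  imports "HOL-Analysis.Analysis"
begin

definition a_m :: "real \<Rightarrow> real" where
  "a_m m = m * Gamma (1 + m) powr (- 1 / m)"

definition H_k :: "real \<Rightarrow> real \<Rightarrow> real \<Rightarrow> real \<Rightarrow> nat \<Rightarrow> real" where
  "H_k \<eta> \<sigma>2 m \<theta> k =
     4 powr (1 / \<eta>) / sqrt pi * Gamma (1 - 2 / \<eta>) * Gamma (1 / 2 + 2 / \<eta>)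
     * (\<sigma>2 * (real k * a_m m) / (m * \<theta>)) powr (2 / \<eta>)"

definition R_cell :: "real \<Rightarrow> real \<Rightarrow> real \<Rightarrow> real \<Rightarrow> real \<Rightarrow> real" where
  "R_cell \<eta> \<sigma>2 m \<theta> \<Lambda> =
     (\<Sum>k=1..nat \<lceil>m\<rceil>. (-1) ^ (k + 1) * real (nat \<lceil>m\<rceil> choose k) *
        (LBINT x:{0<..}. 1 / (1 + x) * (1 / (1 / \<Lambda> + H_k \<eta> \<sigma>2 m \<theta> k * x powr (2 / \<eta>)))))"

definition R_cell_asy :: "real \<Rightarrow> real \<Rightarrow> real \<Rightarrow> real \<Rightarrow> real" where
  "R_cell_asy \<eta> \<sigma>2 m \<theta> =
     pi / sin (2 * pi / \<eta>) *
     (\<Sum>k=1..nat \<lceil>m\<rceil>. (-1) ^ (k + 1) * real (nat \<lceil>m\<rceil> choose k) * (1 / H_k \<eta> \<sigma>2 m \<theta> k))"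

end

theory Submission
  imports Defs "HOL-Real_Asymp.Real_Asymp"
begin

lemma beta_sub:
  fixes a :: real
  assumes a0: "0 < a" and a1: "a < 1"
  shows "set_integrable lborel {0<..} (\<lambda>x. x powr (-a) / (1 + x))"
    "(LBINT x:{0<..}. x powr (-a) / (1 + x)) = pi / sin (pi * a)"
proof -
  define f where "f = (\<lambda>x::real. x powr (-a) / (1 + x))"
  define g where "g = (\<lambda>t::real. t / (1 - t))"
  define g' where "g' = (\<lambda>t::real. 1 / (1 - t)^2)"
  have deriv: "DERIV g x :> g' x" if "ereal 0 < ereal x" "ereal x < ereal 1" for x
    using that unfolding g_def g'_def
    by (auto intro!: derivative_eq_intros simp: field_simps power2_eq_square)
  have contf: "isCont f (g x)" if "ereal 0 < ereal x" "ereal x < ereal 1" for x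
    using that unfolding f_def g_def
    by (auto intro!: continuous_intros simp: field_simps)
  have contg': "isCont g' x" if "ereal 0 < ereal x" "ereal x < ereal 1" for x
    using that unfolding g'_def
    by (auto intro!: continuous_intros)
  have fnn: "0 \<le> f (g x)" if "ereal 0 < ereal x" "ereal x < ereal 1" for x
    using that unfolding f_def g_def by auto
  have g'nn: "0 \<le> g' x" for x unfolding g'_def by auto
  have A: "((ereal \<circ> g \<circ> real_of_ereal) \<longlongrightarrow> ereal 0) (at_right (ereal 0))"
    unfolding comp_assoc[symmetric] ereal_tendsto_simps1 ereal_tendsto_simps2 g_def
    by real_asymp
  have B: "((ereal \<circ> g \<circ> real_of_ereal) \<longlongrightarrow> \<infinity>) (at_left (ereal 1))"
    unfolding comp_assoc[symmetric] ereal_tendsto_simps1 ereal_tendsto_simps2 g_def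
    by real_asymp
  have eq: "f (g x) * g' x = x powr ((1 - a) - 1) * (1 - x) powr (a - 1)" if "x \<in> {0<..<1}" for x
  proof -
    from that have x: "0 < x" "x < 1" by auto
    have "f (g x) * g' x = (x powr (-a) / (1 - x) powr (-a)) * (1 - x) / (1 - x)^2"
      using x unfolding f_def g_def g'_def by (simp add: powr_divide field_simps)
    also have "\<dots> = x powr (-a) * ((1 - x) powr a / (1 - x) powr 1)"
    proof -
      have alg: "P / inverse Q * R / R^2 = P * (Q / R)" if "Q > 0" "R > 0" for P Q R :: real
        using that by (simp add: field_simps power2_eq_square)
      show ?thesis using x alg[of "(1 - x) powr a" "1 - x" "x powr (-a)"]
        by (simp add: powr_minus)
    qed
    also have "\<dots> = x powr ((1 - a) - 1) * (1 - x) powr (a - 1)"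
      using x by (simp add: powr_diff)
    finally show ?thesis .
  qed
  have intB: "set_integrable lborel {0<..<1} (\<lambda>t. t powr ((1 - a) - 1) * (1 - t) powr (a - 1))"
    by (rule set_integrable_subset[OF integrable_Beta]) (use a0 a1 in auto)
  have intfg: "set_integrable lborel (einterval (ereal 0) (ereal 1)) (\<lambda>x. f (g x) * g' x)"
    using intB by (subst set_integrable_cong[OF refl _ eq]) auto
  note sub = interval_integral_substitution_nonneg[of "ereal 0" "ereal 1" g g' f, OF _ deriv contf contg' fnn g'nn A B intfg]
  show "set_integrable lborel {0<..} (\<lambda>x. x powr (-a) / (1 + x))"
    using sub(1) by (simp add: f_def)
  have "(LBINT x:{0<..}. x powr (-a) / (1 + x)) = (LBINT x=ereal 0..\<infinity>. f x)"
    by (simp add: interval_lebesgue_integral_def f_def)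
  also have "\<dots> = (LBINT x=ereal 0..ereal 1. f (g x) * g' x)"
    using sub(2) by simp
  also have "\<dots> = (LBINT x:{0<..<1}. x powr ((1 - a) - 1) * (1 - x) powr (a - 1))"
    unfolding interval_lebesgue_integral_def by (simp add: set_lebesgue_integral_cong eq)
  also have "\<dots> = (LBINT x:{0..1}. x powr ((1 - a) - 1) * (1 - x) powr (a - 1))"
    using interval_integral_Icc[of 0 1] by (simp add: interval_lebesgue_integral_def)
  also have "\<dots> = integral {0..1} (\<lambda>x. x powr ((1 - a) - 1) * (1 - x) powr (a - 1))"
    by (rule set_borel_integral_eq_integral(2)[OF integrable_Beta]) (use a0 a1 in auto)
  also have "\<dots> = Beta (1 - a) a"
    using has_integral_Beta_real[of "1 - a" a] a0 a1 by (simp add: integral_unique)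
  also have "\<dots> = pi / sin (pi * a)"
  proof -
    have "complex_of_real (Beta (1 - a) a) = Gamma (complex_of_real a) * Gamma (1 - complex_of_real a)"
    proof -
      have "Gamma (1 - complex_of_real a) = complex_of_real (Gamma (1 - a))"
        using Gamma_complex_of_real[of "1 - a"] by simp
      thus ?thesis by (simp add: Beta_def Gamma_complex_of_real mult.commute)
    qed
    also have "\<dots> = of_real pi / sin (of_real pi * of_real a)"
      by (rule Gamma_reflection_complex)
    also have "\<dots> = complex_of_real (pi / sin (pi * a))"
      by (simp add: sin_of_real[symmetric])
    finally show ?thesis by (simp only: of_real_eq_iff)
  qed
  finally show "(LBINT x:{0<..}. x powr (-a) / (1 + x)) = pi / sin (pi * a)" .
qed

lemma lim_int:
  fixes a H :: real
  assumes a0: "0 < a" and a1: "a < 1" and H: "H > 0"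
  shows "((\<lambda>L. LBINT x:{0<..}. 1 / (1 + x) * (1 / (1 / L + H * x powr a)))
          \<longlongrightarrow> pi / sin (pi * a) * (1 / H)) at_top"
proof -
  note B = beta_sub[OF a0 a1]
  define f where "f = (\<lambda>x::real. indicator {0<..} x *\<^sub>R (1 / (1 + x) * (1 / (H * x powr a))))"
  define w where "w = (\<lambda>x::real. indicator {0<..} x *\<^sub>R (x powr (-a) / (1 + x) / H))"
  have fw: "f = w" unfolding f_def w_def
    by (auto simp: indicator_def powr_minus divide_simps fun_eq_iff)
  have intw: "integrable lborel w"
    using set_integrable_mult_left[OF B(1), of "1/H"] unfolding w_def set_integrable_def
    by (simp add: divide_simps)
  have "integral\<^sup>L lborel w = (LBINT x:{0<..}. x powr (-a) / (1 + x)) / H"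
    unfolding w_def set_lebesgue_integral_def[symmetric]
    by (rule set_integral_divide_zero)
  then have intf: "integral\<^sup>L lborel f = pi / sin (pi * a) * (1 / H)"
    using B(2) fw by simp
  have "((\<lambda>L. integral\<^sup>L lborel (\<lambda>x. indicator {0<..} x *\<^sub>R (1 / (1 + x) * (1 / (1 / L + H * x powr a)))))
          \<longlongrightarrow> integral\<^sup>L lborel f) at_top"
  proof (rule integral_dominated_convergence_at_top[where w=w])
    show "f \<in> borel_measurable lborel" unfolding f_def by measurable
    show "(\<lambda>x. indicator {0<..} x *\<^sub>R (1 / (1 + x) * (1 / (1 / L + H * x powr a)))) \<in> borel_measurable lborel" for L
      by measurable
    show "integrable lborel w" by (rule intw)
    show "AE x in lborel. ((\<lambda>L. indicator {0<..} x *\<^sub>R (1 / (1 + x) * (1 / (1 / L + H * x powr a)))) \<longlongrightarrow> f x) at_top"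
    proof (rule AE_I2)
      fix x :: real
      show "((\<lambda>L. indicator {0<..} x *\<^sub>R (1 / (1 + x) * (1 / (1 / L + H * x powr a)))) \<longlongrightarrow> f x) at_top"
      proof (cases "x > 0")
        case True
        have "((\<lambda>L. 1 / (1 + x) * (1 / (1 / L + H * x powr a))) \<longlongrightarrow> 1 / (1 + x) * (1 / (0 + H * x powr a))) at_top"
          using True H by (intro tendsto_intros tendsto_divide_0[OF tendsto_const] filterlim_at_top_imp_at_infinity filterlim_ident) auto
        then show ?thesis using True by (simp add: f_def)
      qed (simp add: f_def)
    qed
    show "\<forall>\<^sub>F L in at_top. AE x in lborel. norm (indicator {0<..} x *\<^sub>R (1 / (1 + x) * (1 / (1 / L + H * x powr a)))) \<le> w x"
    proof (rule eventually_mono[OF eventually_gt_at_top[of 0]], rule AE_I2)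
      fix L x :: real
      assume L: "L > 0"
      show "norm (indicator {0<..} x *\<^sub>R (1 / (1 + x) * (1 / (1 / L + H * x powr a)))) \<le> w x"
      proof (cases "x > 0")
        case True
        have p: "0 < H * x powr a" using True H by simp
        have "1 / (1 / L + H * x powr a) \<le> 1 / (H * x powr a)"
          using L p by (intro divide_left_mono) (auto intro!: mult_pos_pos add_pos_pos)
        then have "1 / (1 + x) * (1 / (1 / L + H * x powr a)) \<le> 1 / (1 + x) * (1 / (H * x powr a))"
          using True by (intro mult_left_mono) auto
        moreover have "0 \<le> 1 / (1 + x) * (1 / (1 / L + H * x powr a))"
          using True L p by simp
        moreover have "w x = 1 / (1 + x) * (1 / (H * x powr a))"
          using True fw[symmetric] by (simp add: f_def)
        ultimately show ?thesis using True by simp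
      qed (simp add: w_def)
    qed
  qed
  then show ?thesis unfolding intf set_lebesgue_integral_def .
qed

lemma Hk_pos:
  assumes "\<eta> > 2" and "\<sigma>2 > 0" and "m > 0" and "\<theta> > 0" and "k \<ge> 1"
  shows "H_k \<eta> \<sigma>2 m \<theta> k > 0"
proof -
  have g1: "Gamma (1 - 2 / \<eta>) > 0" using assms by (intro Gamma_real_pos) (simp add: field_simps)
  have g2: "Gamma (1 / 2 + 2 / \<eta>) > 0" using assms by (intro Gamma_real_pos add_pos_pos) auto
  have g3: "Gamma (1 + m) > 0" using assms by (intro Gamma_real_pos) simp
  have g4: "Gamma (1 + m) \<noteq> 0" using g3 by linarith
  have am: "a_m m > 0" unfolding a_m_def using assms(3) g4 by (intro mult_pos_pos) auto
  have "\<sigma>2 * (real k * a_m m) / (m * \<theta>) > 0" using assms am by simp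
  then show ?thesis unfolding H_k_def using g1 g2 assms am by (intro mult_pos_pos divide_pos_pos) auto
qed

theorem corollary1:
  fixes \<eta> \<sigma>2 m \<theta> :: real
  assumes "\<eta> > 2" and "\<sigma>2 > 0" and "m > 0" and "\<theta> > 0"
  shows "((\<lambda>\<Lambda>. R_cell \<eta> \<sigma>2 m \<theta> \<Lambda>) \<longlongrightarrow> R_cell_asy \<eta> \<sigma>2 m \<theta>) at_top"
proof -
  have a0: "0 < 2 / \<eta>" and a1: "2 / \<eta> < 1" using assms by (auto simp: field_simps)
  have eq: "R_cell_asy \<eta> \<sigma>2 m \<theta> = (\<Sum>k=1..nat \<lceil>m\<rceil>. (-1) ^ (k + 1) * real (nat \<lceil>m\<rceil> choose k) *
        (pi / sin (pi * (2 / \<eta>)) * (1 / H_k \<eta> \<sigma>2 m \<theta> k)))"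
    unfolding R_cell_asy_def sum_distrib_left by (intro sum.cong) (auto simp: mult_ac)
  show ?thesis
    unfolding eq R_cell_def
    by (intro tendsto_sum tendsto_mult_left lim_int[OF a0 a1] Hk_pos[OF assms]) auto
qed
end
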